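(* Let $p\in(0,1)$ and let $(\lambda_n)_{n\ge1}$ be a sequence with $\lambda_1=1$ and $0<\lambda_n\le\lambda_{n-1}$ for all $n>1$. Let $r_1,r_2,\dots$ be $\{0,1\}$-valued random variables with $\Pr(r_1=1)=p$ and, for every $n\ge2$, $\Pr(r_n=1\mid r_1,\dots,r_{n-1})=\lambda_n p+(1-\lambda_n)\bar p_{n-1}$, where $\bar p_m=\frac1m\sum_{i=1}^m r_i$. Define $\hat r_1=r_1$, $\hat r_i=\frac{r_i-(1-\lambda_i)\bar p_{i-1}}{\lambda_i}$ for $i\ge2$, and for positive weights $(\omega_i)$ let $\hat p_n=\frac{\sum_{i=1}^n\omega_i\hat r_i}{\sum_{i=1}^n\omega_i}$. (a) If $\omega_i=1$ for all $i$ and $\sum_{i=1}^n\lambda_i^{-2}=o(n^2)$ as $n\to\infty$, then $\hat p_n$ is a consistent estimator of $p$, i.e. $\Pr(|\hat p_n-p|>\epsilon)\to0$ for every $\epsilon>0$. (b) If $\omega_i=\lambda_i$ for all $i$ and $n=o\big((\sum_{i=1}^n\lambda_i)^2\big)$ as $n\to\infty$, then $\hat p_n$ is a consistent estimator of $p$. *)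

theory Defs
  imports "HOL-Probability.Probability" "HOL-Library.Landau_Symbols"
begin

text \<open>Random variables are indexed from 1: r 1, r 2, ...\<close>

definition pbar :: "(nat \<Rightarrow> 'a \<Rightarrow> real) \<Rightarrow> nat \<Rightarrow> 'a \<Rightarrow> real" where
  "pbar r m x = (\<Sum>i=1..m. r i x) / real m"

definition rhat :: "(nat \<Rightarrow> real) \<Rightarrow> (nat \<Rightarrow> 'a \<Rightarrow> real) \<Rightarrow> nat \<Rightarrow> 'a \<Rightarrow> real" where
  "rhat lam r i x = (if i = 1 then r 1 x
                     else (r i x - (1 - lam i) * pbar r (i - 1) x) / lam i)"

definition phat :: "(nat \<Rightarrow> real) \<Rightarrow> (nat \<Rightarrow> real) \<Rightarrow> (nat \<Rightarrow> 'a \<Rightarrow> real) \<Rightarrow> nat \<Rightarrow> 'a \<Rightarrow> real" where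
  "phat w lam r n x = (\<Sum>i=1..n. w i * rhat lam r i x) / (\<Sum>i=1..n. w i)"

definition consistent_estimator :: "'a measure \<Rightarrow> (nat \<Rightarrow> 'a \<Rightarrow> real) \<Rightarrow> real \<Rightarrow> bool" where
  "consistent_estimator M est p \<longleftrightarrow>
     (\<forall>\<epsilon>>0. (\<lambda>n. measure M {x \<in> space M. \<bar>est n x - p\<bar> > \<epsilon>}) \<longlonglongrightarrow> 0)"

end

theory Submission
  imports Defs
begin

locale model = prob_space M for M :: "'a measure" +
  fixes p :: real and lam :: "nat \<Rightarrow> real" and r :: "nat \<Rightarrow> 'a \<Rightarrow> real"
  assumes p0: "0 < p" and p1: "p < 1"
    and lam1: "lam 1 = 1"
    and lam_mono: "\<And>n. n > 1 \<Longrightarrow> 0 < lam n \<and> lam n \<le> lam (n - 1)"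
    and rmeas[measurable]: "\<And>i. i \<ge> 1 \<Longrightarrow> r i \<in> borel_measurable M"
    and r01: "\<And>i x. i \<ge> 1 \<Longrightarrow> x \<in> space M \<Longrightarrow> r i x \<in> {0, 1}"
    and hyp1: "measure M {x \<in> space M. r 1 x = 1} = p"
    and hypn: "\<And>n a. n \<ge> 2 \<Longrightarrow> (\<forall>i\<in>{1..n-1}. a i \<in> {0, 1}) \<Longrightarrow>
           measure M {x \<in> space M. r n x = 1 \<and> (\<forall>i\<in>{1..n-1}. r i x = a i)}
           = (lam n * p + (1 - lam n) * ((\<Sum>i=1..n-1. a i) / real (n - 1)))
             * measure M {x \<in> space M. \<forall>i\<in>{1..n-1}. r i x = a i}"
begin

definition c :: "nat \<Rightarrow> 'a \<Rightarrow> real" where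
  "c n x = lam n * p + (1 - lam n) * pbar r (n - 1) x"

definition e :: "nat \<Rightarrow> 'a \<Rightarrow> real" where
  "e n x = r n x - c n x"

lemma lam_bounds: "n \<ge> 1 \<Longrightarrow> 0 < lam n \<and> lam n \<le> 1"
proof (induction n rule: dec_induct)
  case base then show ?case using lam1 by simp
next
  case (step n)
  then show ?case using lam_mono[of "Suc n"] by auto
qed

lemma pbar_bounds: "x \<in> space M \<Longrightarrow> 0 \<le> pbar r m x \<and> pbar r m x \<le> 1"
proof -
  assume x: "x \<in> space M"
  have h: "\<And>i. i \<in> {1..m} \<Longrightarrow> 0 \<le> r i x \<and> r i x \<le> 1" using r01[OF _ x] by fastforce
  have "0 \<le> (\<Sum>i=1..m. r i x)" using h by (intro sum_nonneg) auto
  moreover have "(\<Sum>i=1..m. r i x) \<le> (\<Sum>i=1..m. 1)" using h by (intro sum_mono) auto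
  ultimately show ?thesis by (cases "m = 0") (auto simp: pbar_def field_simps)
qed

lemma c_bounds: "n \<ge> 1 \<Longrightarrow> x \<in> space M \<Longrightarrow> 0 \<le> c n x \<and> c n x \<le> 1"
proof -
  assume n: "n \<ge> 1" and x: "x \<in> space M"
  have l: "0 < lam n" "lam n \<le> 1" using lam_bounds[OF n] by auto
  have q: "0 \<le> pbar r (n-1) x" "pbar r (n-1) x \<le> 1" using pbar_bounds[OF x] by auto
  have "0 \<le> (1 - lam n) * pbar r (n - 1) x" using l q by simp
  moreover have "(1 - lam n) * pbar r (n - 1) x \<le> (1 - lam n)" using l q
    by (simp add: mult_left_le)
  moreover have "lam n * p \<le> lam n" using l p1 by simp
  moreover have "0 \<le> lam n * p" using l p0 by simp
  ultimately show ?thesis unfolding c_def by linarith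
qed

lemma e_bound: "n \<ge> 1 \<Longrightarrow> x \<in> space M \<Longrightarrow> \<bar>e n x\<bar> \<le> 1"
  using c_bounds[of n x] r01[of n x] unfolding e_def by auto

lemma e2_bound: "n \<ge> 1 \<Longrightarrow> x \<in> space M \<Longrightarrow> (e n x)^2 \<le> 1"
proof -
  assume "n \<ge> 1" "x \<in> space M"
  then have "\<bar>e n x\<bar>^2 \<le> 1^2" by (intro power_mono e_bound) auto
  then show ?thesis by simp
qed

lemma pbar_meas[measurable]: "pbar r m \<in> borel_measurable M"
  unfolding pbar_def by measurable

lemma e_meas[measurable]: "n \<ge> 1 \<Longrightarrow> e n \<in> borel_measurable M"
  unfolding e_def c_def by measurable

lemma bounded_integrable:
  fixes B :: real
  assumes "f \<in> borel_measurable M" "\<And>x. x \<in> space M \<Longrightarrow> \<bar>f x\<bar> \<le> B"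
  shows "integrable M f"
  using assms by (intro integrable_const_bound[where B=B]) (auto intro: AE_I2)

lemma key:
  assumes n: "n \<ge> 1"
    and G: "\<And>x y. x \<in> space M \<Longrightarrow> y \<in> space M \<Longrightarrow> (\<forall>i\<in>{1..n-1}. r i x = r i y) \<Longrightarrow> G x = G y"
  shows "(\<integral>x. G x * e n x \<partial>M) = 0"
proof -
  define I where "I = {1..n-1}"
  define As where "As = (\<Pi>\<^sub>E i\<in>I. {0,1::real})"
  define A where "A a = {x\<in>space M. \<forall>i\<in>I. r i x = a i}" for a
  define B where "B a = {x\<in>space M. r n x = 1 \<and> (\<forall>i\<in>I. r i x = a i)}" for a
  define ga where "ga a = G (SOME x. x \<in> A a)" for a
  define ca where "ca a = lam n * p + (1 - lam n) * ((\<Sum>i=1..n-1. a i) / real (n-1))" for a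
  have finI: "finite I" unfolding I_def by simp
  have finAs: "finite As" unfolding As_def using finI by (intro finite_PiE) auto
  have Ameas: "A a \<in> sets M" for a
  proof -
    have "A a = space M \<inter> (\<Inter>i\<in>I. {x\<in>space M. r i x = a i})" unfolding A_def by auto
    moreover have "{x\<in>space M. r i x = a i} \<in> sets M" if "i \<in> I" for i
    proof -
      have [measurable]: "r i \<in> borel_measurable M" using rmeas that by (auto simp: I_def)
      show ?thesis by measurable
    qed
    then have "(\<Inter>i\<in>I. {x\<in>space M. r i x = a i}) \<in> sets M \<or> I = {}"
      using finI by (cases "I = {}") (auto intro!: sets.finite_INT)
    ultimately show ?thesis by auto
  qed
  have Bmeas: "B a \<in> sets M" for a
  proof -
    have "B a = {x\<in>space M. r n x = 1} \<inter> A a" unfolding A_def B_def by auto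
    then show ?thesis using Ameas[of a] n by auto
  qed
  have hyp: "measure M (B a) = ca a * measure M (A a)" if a: "a \<in> As" for a
  proof (cases "n = 1")
    case True
    then have "I = {}" unfolding I_def by simp
    then have "B a = {x \<in> space M. r 1 x = 1}" "A a = space M" unfolding A_def B_def
      using True by auto
    then show ?thesis using hyp1 True lam1 prob_space unfolding ca_def by simp
  next
    case False
    then have n2: "n \<ge> 2" using n by simp
    have "\<forall>i\<in>{1..n-1}. a i \<in> {0, 1}" using a unfolding As_def I_def by (auto simp: PiE_iff)
    from hypn[OF n2 this] show ?thesis unfolding A_def B_def ca_def I_def by simp
  qed
  have decomp: "G x * e n x = (\<Sum>a\<in>As. ga a * indicator (B a) x - ga a * ca a * indicator (A a) x)"
    if x: "x \<in> space M" for x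
  proof -
    define a0 where "a0 = restrict (\<lambda>i. r i x) I"
    have a0: "a0 \<in> As" unfolding a0_def As_def using r01[OF _ x] by (auto simp: I_def)
    have iffA: "x \<in> A a \<longleftrightarrow> a = a0" if "a \<in> As" for a
    proof
      assume "x \<in> A a"
      then have "\<forall>i\<in>I. r i x = a i" unfolding A_def by auto
      then show "a = a0" using that unfolding a0_def As_def by (auto simp: PiE_iff intro!: extensionalityI[of _ I])
    next
      assume "a = a0" then show "x \<in> A a" unfolding A_def a0_def using x by auto
    qed
    have summand: "ga a * indicator (B a) x - ga a * ca a * indicator (A a) x
        = (if a = a0 then ga a0 * (r n x - ca a0) else 0)" if "a \<in> As" for a
    proof -
      have "x \<in> B a \<longleftrightarrow> x \<in> A a \<and> r n x = 1" unfolding A_def B_def by auto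
      then show ?thesis using iffA[OF that] r01[OF n x] by (auto simp: indicator_def algebra_simps)
    qed
    have "(\<Sum>a\<in>As. ga a * indicator (B a) x - ga a * ca a * indicator (A a) x)
        = (\<Sum>a\<in>As. (if a = a0 then ga a0 * (r n x - ca a0) else 0))"
      using summand by (rule sum.cong[OF refl])
    also have "\<dots> = ga a0 * (r n x - ca a0)" using a0 finAs by simp
    also have "ga a0 = G x"
    proof -
      have "x \<in> A a0" using iffA[OF a0] by simp
      then have "(SOME y. y \<in> A a0) \<in> A a0" by (rule someI)
      then have "(SOME y. y \<in> A a0) \<in> space M" "\<forall>i\<in>I. r i (SOME y. y \<in> A a0) = r i x"
        unfolding A_def a0_def by auto
      then show ?thesis unfolding ga_def using G x unfolding I_def by metis
    qed
    also have "ca a0 = c n x"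
    proof -
      have "(\<Sum>i=1..n-1. a0 i) = (\<Sum>i=1..n-1. r i x)" unfolding a0_def I_def by simp
      then show ?thesis unfolding ca_def c_def pbar_def by simp
    qed
    finally show ?thesis unfolding e_def by simp
  qed
  have intA: "integrable M (indicator (A a) :: 'a \<Rightarrow> real)" for a using Ameas by (intro integrable_real_indicator) (auto simp: emeasure_eq_measure)
  have intB: "integrable M (indicator (B a) :: 'a \<Rightarrow> real)" for a using Bmeas by (intro integrable_real_indicator) (auto simp: emeasure_eq_measure)
  have "(\<integral>x. G x * e n x \<partial>M) = (\<integral>x. (\<Sum>a\<in>As. ga a * indicator (B a) x - ga a * ca a * indicator (A a) x) \<partial>M)"
    using decomp by (intro Bochner_Integration.integral_cong) auto
  also have "\<dots> = (\<Sum>a\<in>As. (\<integral>x. ga a * indicator (B a) x - ga a * ca a * indicator (A a) x \<partial>M))"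
    by (rule Bochner_Integration.integral_sum) (use intA intB in auto)
  also have "\<dots> = (\<Sum>a\<in>As. ga a * measure M (B a) - ga a * ca a * measure M (A a))"
  proof (intro sum.cong refl)
    fix a
    have "(\<integral>x. ga a * indicator (B a) x - ga a * ca a * indicator (A a) x \<partial>M)
       = ga a * (\<integral>x. indicator (B a) x \<partial>M) - ga a * ca a * (\<integral>x. indicator (A a) x \<partial>M)"
      using intA intB by simp
    also have "\<dots> = ga a * measure M (B a) - ga a * ca a * measure M (A a)"
      using sets.sets_into_space[OF Ameas[of a]] sets.sets_into_space[OF Bmeas[of a]]
      by (simp add: Int_absorb2)
    finally show "(\<integral>x. ga a * indicator (B a) x - ga a * ca a * indicator (A a) x \<partial>M)
       = ga a * measure M (B a) - ga a * ca a * measure M (A a)" .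
  qed
  also have "\<dots> = 0" using hyp by (intro sum.neutral) auto
  finally show ?thesis .
qed

definition S :: "(nat \<Rightarrow> real) \<Rightarrow> nat \<Rightarrow> 'a \<Rightarrow> real" where
  "S w n x = (\<Sum>i=1..n. w i / lam i * e i x)"

lemma S_meas[measurable]: "S w n \<in> borel_measurable M"
  unfolding S_def by (intro borel_measurable_sum borel_measurable_times borel_measurable_const e_meas) auto

lemma S_bound: "x \<in> space M \<Longrightarrow> \<bar>S w n x\<bar> \<le> (\<Sum>i=1..n. \<bar>w i / lam i\<bar>)"
proof -
  assume x: "x \<in> space M"
  have "\<bar>S w n x\<bar> \<le> (\<Sum>i=1..n. \<bar>w i / lam i * e i x\<bar>)" unfolding S_def by (rule sum_abs)
  also have "\<dots> \<le> (\<Sum>i=1..n. \<bar>w i / lam i\<bar>)"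
  proof (intro sum_mono)
    fix i assume "i \<in> {1..n}"
    then have "\<bar>e i x\<bar> \<le> 1" using e_bound x by auto
    then show "\<bar>w i / lam i * e i x\<bar> \<le> \<bar>w i / lam i\<bar>"
      unfolding abs_mult[of "w i / lam i"] using mult_left_le[of "\<bar>e i x\<bar>" "\<bar>w i / lam i\<bar>"] by simp
  qed
  finally show ?thesis .
qed

lemma e_dep: "i \<ge> 1 \<Longrightarrow> (\<forall>j\<in>{1..i}. r j x = r j y) \<Longrightarrow> e i x = e i y"
proof -
  assume i: "i \<ge> 1" and h: "\<forall>j\<in>{1..i}. r j x = r j y"
  have "(\<Sum>j=1..i-1. r j x) = (\<Sum>j=1..i-1. r j y)" using h by (intro sum.cong) auto
  moreover have "r i x = r i y" using h i by auto
  ultimately show ?thesis unfolding e_def c_def pbar_def by simp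
qed

lemma S2_bound: "x \<in> space M \<Longrightarrow> \<bar>(S w n x)^2\<bar> \<le> (\<Sum>i=1..n. \<bar>w i / lam i\<bar>)^2"
proof -
  assume x: "x \<in> space M"
  have "\<bar>S w n x\<bar>^2 \<le> (\<Sum>i=1..n. \<bar>w i / lam i\<bar>)^2"
    by (rule power_mono[OF S_bound[OF x]]) simp
  then show ?thesis by simp
qed

lemma S_dep: "(\<forall>j\<in>{1..n}. r j x = r j y) \<Longrightarrow> S w n x = S w n y"
  unfolding S_def by (intro sum.cong refl) (auto intro!: e_dep)

lemma S_var: "(\<integral>x. (S w n x)^2 \<partial>M) \<le> (\<Sum>i=1..n. (w i / lam i)^2)"
proof (induction n)
  case 0 then show ?case by (simp add: S_def)
next
  case (Suc n)
  define k where "k = w (Suc n) / lam (Suc n)"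
  have Seq: "S w (Suc n) x = S w n x + k * e (Suc n) x" for x
    unfolding S_def k_def by simp
  have i1: "integrable M (\<lambda>x. (S w n x)^2)"
    by (rule bounded_integrable[where B="(\<Sum>i=1..n. \<bar>w i / lam i\<bar>)^2"]) 
       (simp, rule S2_bound)
  have i2: "integrable M (\<lambda>x. S w n x * e (Suc n) x)"
  proof (rule bounded_integrable[where B="(\<Sum>i=1..n. \<bar>w i / lam i\<bar>)"])
    show "(\<lambda>x. S w n x * e (Suc n) x) \<in> borel_measurable M" using e_meas[of "Suc n"] by measurable
    fix x assume x: "x \<in> space M"
    have "\<bar>S w n x * e (Suc n) x\<bar> = \<bar>S w n x\<bar> * \<bar>e (Suc n) x\<bar>" by (simp add: abs_mult)
    also have "\<dots> \<le> \<bar>S w n x\<bar> * 1" using e_bound[of "Suc n" x] x by (intro mult_left_mono) auto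
    finally show "\<bar>S w n x * e (Suc n) x\<bar> \<le> (\<Sum>i=1..n. \<bar>w i / lam i\<bar>)" using S_bound[OF x, of w n] by linarith
  qed
  have i3: "integrable M (\<lambda>x. (e (Suc n) x)^2)"
    by (rule bounded_integrable[where B=1]) (use e_meas[of "Suc n"] e2_bound[of "Suc n"] in auto)
  have cross: "(\<integral>x. S w n x * e (Suc n) x \<partial>M) = 0"
    by (rule key) (auto intro: S_dep)
  have e2: "(\<integral>x. (e (Suc n) x)^2 \<partial>M) \<le> (\<integral>x. 1 \<partial>M)"
  proof (rule integral_mono[OF i3])
    show "integrable M (\<lambda>x. 1::real)" by simp
    fix x assume "x \<in> space M"
    then show "(e (Suc n) x)^2 \<le> 1" by (intro e2_bound) auto
  qed
  have "(\<integral>x. (S w (Suc n) x)^2 \<partial>M)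
      = (\<integral>x. (S w n x)^2 + (2 * k) * (S w n x * e (Suc n) x) + k^2 * (e (Suc n) x)^2 \<partial>M)"
    unfolding Seq by (simp add: power2_eq_square algebra_simps)
  also have "\<dots> = (\<integral>x. (S w n x)^2 \<partial>M) + (2 * k) * (\<integral>x. S w n x * e (Suc n) x \<partial>M)
      + k^2 * (\<integral>x. (e (Suc n) x)^2 \<partial>M)"
    using i1 i2 i3 by simp
  also have "\<dots> \<le> (\<Sum>i=1..n. (w i / lam i)^2) + k^2"
  proof -
    have "k^2 * (\<integral>x. (e (Suc n) x)^2 \<partial>M) \<le> k^2" using e2 prob_space mult_left_le[of _ "k^2"] by simp
    then show ?thesis using Suc.IH cross by simp
  qed
  also have "\<dots> = (\<Sum>i=1..Suc n. (w i / lam i)^2)" unfolding k_def by simp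
  finally show ?case .
qed

lemma rhat_eq: "i \<ge> 1 \<Longrightarrow> rhat lam r i x = p + e i x / lam i"
proof -
  assume i: "i \<ge> 1"
  have l: "lam i > 0" using lam_bounds[OF i] by simp
  show ?thesis
  proof (cases "i = 1")
    case True then show ?thesis unfolding rhat_def e_def c_def using lam1 by simp
  next
    case False then show ?thesis unfolding rhat_def e_def c_def using l
      by (simp add: field_simps)
  qed
qed

lemma phat_eq:
  assumes W: "(\<Sum>i=1..n. w i) > 0"
  shows "phat w lam r n x - p = S w n x / (\<Sum>i=1..n. w i)"
proof -
  have "(\<Sum>i=1..n. w i * rhat lam r i x) = (\<Sum>i=1..n. p * w i + w i / lam i * e i x)"
    by (intro sum.cong refl) (auto simp: rhat_eq algebra_simps)
  also have "\<dots> = p * (\<Sum>i=1..n. w i) + S w n x"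
    unfolding S_def by (simp add: sum.distrib sum_distrib_left)
  finally show ?thesis unfolding phat_def using W by (simp add: field_simps)
qed

lemma tail_bound:
  assumes W: "(\<Sum>i=1..n. w i) > 0" and eps: "\<epsilon> > 0"
  shows "measure M {x \<in> space M. \<bar>phat w lam r n x - p\<bar> > \<epsilon>}
     \<le> (\<Sum>i=1..n. (w i / lam i)^2) / (\<epsilon> * (\<Sum>i=1..n. w i))^2"
proof -
  define W where "W = (\<Sum>i=1..n. w i)"
  have Wp: "W > 0" using W unfolding W_def .
  have i1: "integrable M (\<lambda>x. (S w n x)^2)"
    by (rule bounded_integrable[where B="(\<Sum>i=1..n. \<bar>w i / lam i\<bar>)^2"]) 
       (simp, rule S2_bound)
  have sub: "{x \<in> space M. \<bar>phat w lam r n x - p\<bar> > \<epsilon>} \<subseteq> {x \<in> space M. (S w n x)^2 \<ge> (\<epsilon> * W)^2}"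
  proof safe
    fix x assume x: "x \<in> space M" and h: "\<bar>phat w lam r n x - p\<bar> > \<epsilon>"
    then have "\<bar>S w n x / W\<bar> > \<epsilon>" using phat_eq[OF W] unfolding W_def by simp
    then have "\<bar>S w n x\<bar> > \<epsilon> * W" using Wp by (simp add: field_simps abs_div)
    then have "\<bar>S w n x\<bar> \<ge> \<bar>\<epsilon> * W\<bar>" using eps Wp by simp
    then show "(S w n x)^2 \<ge> (\<epsilon> * W)^2" by (simp add: abs_le_square_iff)
  qed
  have "measure M {x \<in> space M. \<bar>phat w lam r n x - p\<bar> > \<epsilon>} \<le> measure M {x \<in> space M. (S w n x)^2 \<ge> (\<epsilon> * W)^2}"
    by (rule finite_measure_mono[OF sub]) measurable
  also have "\<dots> \<le> (\<integral>x. (S w n x)^2 \<partial>M) / (\<epsilon> * W)^2"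
    by (rule integral_Markov_inequality_measure[OF i1, where A="space M"]) (use eps Wp in auto)
  also have "\<dots> \<le> (\<Sum>i=1..n. (w i / lam i)^2) / (\<epsilon> * W)^2"
    using S_var eps Wp by (intro divide_right_mono) auto
  finally show ?thesis unfolding W_def .
qed

lemma consistent_general:
  assumes wpos: "\<And>i. i \<ge> 1 \<Longrightarrow> w i > 0"
    and lim: "(\<lambda>n. (\<Sum>i=1..n. (w i / lam i)^2) / (\<Sum>i=1..n. w i)^2) \<longlonglongrightarrow> 0"
  shows "consistent_estimator M (phat w lam r) p"
  unfolding consistent_estimator_def
proof (intro allI impI)
  fix \<epsilon> :: real assume eps: "\<epsilon> > 0"
  have lim2: "(\<lambda>n. (1 / \<epsilon>^2) * ((\<Sum>i=1..n. (w i / lam i)^2) / (\<Sum>i=1..n. w i)^2)) \<longlonglongrightarrow> 0"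
    by (rule tendsto_mult_right_zero[OF lim])
  show "(\<lambda>n. measure M {x \<in> space M. \<bar>phat w lam r n x - p\<bar> > \<epsilon>}) \<longlonglongrightarrow> 0"
  proof (rule tendsto_sandwich[OF _ _ tendsto_const lim2])
    show "\<forall>\<^sub>F n in sequentially. 0 \<le> measure M {x \<in> space M. \<bar>phat w lam r n x - p\<bar> > \<epsilon>}"
      by simp
    show "\<forall>\<^sub>F n in sequentially. measure M {x \<in> space M. \<bar>phat w lam r n x - p\<bar> > \<epsilon>}
        \<le> (1 / \<epsilon>^2) * ((\<Sum>i=1..n. (w i / lam i)^2) / (\<Sum>i=1..n. w i)^2)"
      using eventually_ge_at_top[of 1]
    proof eventually_elim
      case (elim n)
      have "(\<Sum>i=1..n. w i) > 0" using elim wpos by (intro sum_pos) auto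
      from tail_bound[OF this eps] show ?case by (simp add: power_mult_distrib)
    qed
  qed
qed


end

theorem corollaryA15:
  fixes M :: "'a measure" and p :: real and lam :: "nat \<Rightarrow> real"
    and r :: "nat \<Rightarrow> 'a \<Rightarrow> real"
  assumes "prob_space M"
    and "0 < p" "p < 1"
    and "lam 1 = 1"
    and "\<And>n. n > 1 \<Longrightarrow> 0 < lam n \<and> lam n \<le> lam (n - 1)"
    and "\<And>i. i \<ge> 1 \<Longrightarrow> r i \<in> borel_measurable M"
    and "\<And>i x. i \<ge> 1 \<Longrightarrow> x \<in> space M \<Longrightarrow> r i x \<in> {0, 1}"
    and "measure M {x \<in> space M. r 1 x = 1} = p"
    and "\<And>n a. n \<ge> 2 \<Longrightarrow> (\<forall>i\<in>{1..n-1}. a i \<in> {0, 1}) \<Longrightarrow>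
           measure M {x \<in> space M. r n x = 1 \<and> (\<forall>i\<in>{1..n-1}. r i x = a i)}
           = (lam n * p + (1 - lam n) * ((\<Sum>i=1..n-1. a i) / real (n - 1)))
             * measure M {x \<in> space M. \<forall>i\<in>{1..n-1}. r i x = a i}"
  shows "((\<lambda>n. \<Sum>i=1..n. 1 / (lam i)^2) \<in> o(\<lambda>n. (real n)^2)
            \<longrightarrow> consistent_estimator M (phat (\<lambda>_. 1) lam r) p)
       \<and> ((\<lambda>n. real n) \<in> o(\<lambda>n. (\<Sum>i=1..n. lam i)^2)
            \<longrightarrow> consistent_estimator M (phat lam lam r) p)"
proof -
  interpret model M p lam r
    by (rule model.intro[OF assms(1)], unfold_locales) (use assms in auto)
  show ?thesis
  proof (intro conjI impI)
    assume h: "(\<lambda>n. \<Sum>i=1..n. 1 / (lam i)^2) \<in> o(\<lambda>n. (real n)^2)"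
    have "(\<lambda>n. (\<Sum>i=1..n. 1 / (lam i)^2) / (real n)^2) \<longlonglongrightarrow> 0"
      using smalloD_tendsto[OF h] .
    moreover have "(\<lambda>n. (\<Sum>i=1..n. 1 / (lam i)^2) / (real n)^2)
        = (\<lambda>n. (\<Sum>i=1..n. ((\<lambda>_. 1::real) i / lam i)^2) / (\<Sum>i=1..n. (\<lambda>_. 1::real) i)^2)"
      by (simp add: power_divide)
    ultimately show "consistent_estimator M (phat (\<lambda>_. 1) lam r) p"
      by (intro consistent_general) auto
  next
    assume h: "(\<lambda>n. real n) \<in> o(\<lambda>n. (\<Sum>i=1..n. lam i)^2)"
    have "(\<lambda>n. real n / (\<Sum>i=1..n. lam i)^2) \<longlonglongrightarrow> 0"
      using smalloD_tendsto[OF h] .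
    moreover have "(\<lambda>n. real n / (\<Sum>i=1..n. lam i)^2)
        = (\<lambda>n. (\<Sum>i=1..n. (lam i / lam i)^2) / (\<Sum>i=1..n. lam i)^2)"
    proof
      fix n
      have "(\<Sum>i=1..n. (lam i / lam i)^2) = (\<Sum>i=1..n. (1::real))"
        using lam_bounds by (intro sum.cong) force+
      then show "real n / (\<Sum>i=1..n. lam i)^2 = (\<Sum>i=1..n. (lam i / lam i)^2) / (\<Sum>i=1..n. lam i)^2"
        by simp
    qed
    ultimately show "consistent_estimator M (phat lam lam r) p"
      using lam_bounds by (intro consistent_general) auto
  qed
qed

end
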